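(* Let $G$ be a connected graph of order $n$ with exactly $k$ cut edges. If $SO(G)$ is maximum among all connected graphs of order $n$ with exactly $k$ cut edges, then every cut edge of $G$ is pendent (has an end vertex of degree one).
   Context: For a graph $G$, $d_G(w)$ denotes the degree of vertex $w$, and the Sombor index is $SO(G)=\sum_{ab\in E(G)}\sqrt{d_G(a)^2+d_G(b)^2}$. A cut edge is an edge whose deletion disconnects the graph. *)

theory Defs
  imports "HOL-Analysis.Analysis"
begin

definition simple_graph :: "'a set \<Rightarrow> 'a set set \<Rightarrow> bool" where
  "simple_graph V E \<longleftrightarrow> finite V \<and> (\<forall>e\<in>E. e \<subseteq> V \<and> card e = 2)"

definition degree :: "'a set set \<Rightarrow> 'a \<Rightarrow> nat" where
  "degree E v = card {e \<in> E. v \<in> e}"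

definition adj :: "'a set set \<Rightarrow> 'a \<Rightarrow> 'a \<Rightarrow> bool" where
  "adj E u v \<longleftrightarrow> {u, v} \<in> E"

definition connected_graph :: "'a set \<Rightarrow> 'a set set \<Rightarrow> bool" where
  "connected_graph V E \<longleftrightarrow> V \<noteq> {} \<and> (\<forall>u\<in>V. \<forall>v\<in>V. (adj E)\<^sup>*\<^sup>* u v)"

definition cut_edge :: "'a set \<Rightarrow> 'a set set \<Rightarrow> 'a set \<Rightarrow> bool" where
  "cut_edge V E e \<longleftrightarrow> e \<in> E \<and> \<not> connected_graph V (E - {e})"

definition cut_edges :: "'a set \<Rightarrow> 'a set set \<Rightarrow> 'a set set" where
  "cut_edges V E = {e \<in> E. cut_edge V E e}"

definition sombor :: "'a set set \<Rightarrow> real" where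
  "sombor E = (\<Sum>e\<in>E. (THE s. \<exists>a b. e = {a, b} \<and> a \<noteq> b \<and>
      s = sqrt (real (degree E a)^2 + real (degree E b)^2)))"

definition pendent_edge :: "'a set set \<Rightarrow> 'a set \<Rightarrow> bool" where
  "pendent_edge E e \<longleftrightarrow> (\<exists>v\<in>e. degree E v = 1)"

end

theory Submission
  imports Defs
begin

lemma adj_sym: "adj F x y = adj F y x"
  by (simp add: adj_def insert_commute)

lemma R_sym: "(adj F)\<^sup>*\<^sup>* x y \<Longrightarrow> (adj F)\<^sup>*\<^sup>* y x"
proof (induction rule: rtranclp_induct)
  case base then show ?case by simp
next
  case (step y z)
  then show ?case by (metis adj_sym converse_rtranclp_into_rtranclp)
qed

lemma cut_edge_iff:
  assumes "simple_graph V E" "connected_graph V E" "{a,b} \<in> E"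
  shows "cut_edge V E {a,b} \<longleftrightarrow> \<not> (adj (E - {{a,b}}))\<^sup>*\<^sup>* a b"
proof
  assume c: "cut_edge V E {a,b}"
  show "\<not> (adj (E - {{a,b}}))\<^sup>*\<^sup>* a b"
  proof
    assume r: "(adj (E - {{a,b}}))\<^sup>*\<^sup>* a b"
    have st: "(adj (E - {{a,b}}))\<^sup>*\<^sup>* x y" if "adj E x y" for x y
    proof (cases "{x,y} = {a,b}")
      case True
      then have "(x = a \<and> y = b) \<or> (x = b \<and> y = a)" by (simp add: doubleton_eq_iff)
      then show ?thesis using r R_sym[OF r] by (elim disjE) simp_all
    next
      case False
      then have "adj (E - {{a,b}}) x y" using that by (simp add: adj_def)
      then show ?thesis by simp
    qed
    have "(adj (E - {{a,b}}))\<^sup>*\<^sup>* x y" if "x \<in> V" "y \<in> V" for x y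
    proof -
      have "(adj E)\<^sup>*\<^sup>* x y" using assms(2) that unfolding connected_graph_def by blast
      then show ?thesis
      proof (induction rule: rtranclp_induct)
        case base then show ?case by simp
      next
        case (step y z) then show ?case using st[of y z] rtranclp_trans[of _ x y z] by blast
      qed
    qed
    then have "connected_graph V (E - {{a,b}})" using assms(2) unfolding connected_graph_def by blast
    then show False using c unfolding cut_edge_def by blast
  qed
next
  assume n: "\<not> (adj (E - {{a,b}}))\<^sup>*\<^sup>* a b"
  have "a \<in> V" "b \<in> V" using assms(1,3) unfolding simple_graph_def by auto
  then have "\<not> connected_graph V (E - {{a,b}})" using n unfolding connected_graph_def by blast
  then show "cut_edge V E {a,b}" using assms(3) unfolding cut_edge_def by blast
qed

definition st :: "'a set set \<Rightarrow> 'a set \<Rightarrow> real" where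
  "st E e = (THE s. \<exists>a b. e = {a, b} \<and> a \<noteq> b \<and>
      s = sqrt (real (degree E a)^2 + real (degree E b)^2))"

lemma sombor_st: "sombor E = (\<Sum>e\<in>E. st E e)"
  unfolding sombor_def st_def ..

lemma st_eq:
  assumes "a \<noteq> b"
  shows "st E {a,b} = sqrt (real (degree E a)^2 + real (degree E b)^2)"
  unfolding st_def
proof (rule the_equality)
  show "\<exists>x y. {a, b} = {x, y} \<and> x \<noteq> y \<and> sqrt (real (degree E a)^2 + real (degree E b)^2) = sqrt (real (degree E x)^2 + real (degree E y)^2)"
    using assms by (intro exI[of _ a] exI[of _ b]) simp
next
  fix s assume "\<exists>x y. {a, b} = {x, y} \<and> x \<noteq> y \<and> s = sqrt (real (degree E x)^2 + real (degree E y)^2)"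
  then obtain x y where xy: "{a, b} = {x, y}" "s = sqrt (real (degree E x)^2 + real (degree E y)^2)" by blast
  from xy(1) have "(a = x \<and> b = y) \<or> (a = y \<and> b = x)" by (simp add: doubleton_eq_iff)
  then show "s = sqrt (real (degree E a)^2 + real (degree E b)^2)"
    using xy(2) by (elim disjE) (simp_all add: add.commute)
qed

lemma card2_ex: assumes "card g = 2" "v \<in> g" shows "\<exists>y. g = {v,y} \<and> y \<noteq> v"
proof -
  obtain a b where ab: "g = {a,b}" "a \<noteq> b" using assms(1) unfolding card_2_iff by blast
  show ?thesis
  proof (cases "v = a")
    case True then show ?thesis using ab by (intro exI[of _ b]) simp
  next
    case False then have "v = b" using ab assms(2) by simp
    then show ?thesis using ab by (intro exI[of _ a]) (simp add: insert_commute)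
  qed
qed

lemma card2_eq: assumes "card g = 2" "u \<in> g" "v \<in> g" "u \<noteq> v" shows "g = {u,v}"
proof -
  obtain y where y: "g = {u,y}" "y \<noteq> u" using card2_ex[OF assms(1,2)] by blast
  then have "y = v" using assms(3,4) by simp
  then show ?thesis using y by simp
qed


theorem proposition3p2:
  fixes V :: "'a set" and E :: "'a set set" and n k :: nat
  assumes "simple_graph V E" and "connected_graph V E"
    and "card V = n" and "card (cut_edges V E) = k"
    and "\<forall>(V'::'a set) (E'::'a set set). simple_graph V' E' \<and> connected_graph V' E' \<and> card V' = n
            \<and> card (cut_edges V' E') = k \<longrightarrow> sombor E' \<le> sombor E"
  shows "\<forall>e\<in>cut_edges V E. pendent_edge E e"
proof (rule ballI, rule ccontr)
  fix e assume eC: "e \<in> cut_edges V E" and np: "\<not> pendent_edge E e"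
  have finV: "finite V" using assms(1) unfolding simple_graph_def by simp
  have sg: "g \<subseteq> V \<and> card g = 2" if "g \<in> E" for g
    using assms(1) that unfolding simple_graph_def by simp
  have "E \<subseteq> Pow V" using sg by auto
  then have finE: "finite E" using finV finite_Pow_iff finite_subset by metis
  have eE: "e \<in> E" and ecut: "cut_edge V E e" using eC unfolding cut_edges_def by auto
  obtain u v where uv: "e = {u,v}" "u \<noteq> v" using sg[OF eE] unfolding card_2_iff by blast
  have uV: "u \<in> V" and vV: "v \<in> V" using sg[OF eE] uv by auto
  have uvE: "{u,v} \<in> E" using eE uv by simp
  define d where "d = degree E"
  have dpos: "d x \<ge> 1" if "x \<in> g" "g \<in> E" for x g
  proof -
    have "g \<in> {g\<in>E. x \<in> g}" using that by simp
    moreover have "finite {g\<in>E. x \<in> g}" using finE by simp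
    ultimately have "card {g\<in>E. x \<in> g} \<noteq> 0" by (metis card_0_eq empty_iff)
    then show ?thesis unfolding d_def degree_def by simp
  qed
  have "degree E u \<noteq> 1" "degree E v \<noteq> 1" using np uv unfolding pendent_edge_def by auto
  then have du: "d u \<ge> 2" and dv: "d v \<ge> 2"
    using dpos[of u "{u,v}"] dpos[of v "{u,v}"] uvE unfolding d_def by auto
  have nR: "\<not> (adj (E - {{u,v}}))\<^sup>*\<^sup>* u v"
    using cut_edge_iff[OF assms(1,2) uvE] ecut uv by simp

  define psi where "psi x = (if x = v then u else x)" for x
  define f where "f g = (if u \<in> g then g else psi ` g)" for g
  define E' where "E' = f ` E"
  have psi_u: "psi u = u" using uv unfolding psi_def by simp
  have psi_v: "psi v = u" unfolding psi_def by simp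
  have psi_ne: "psi x \<noteq> v" for x using uv unfolding psi_def by auto
  have psi_inj: "inj_on psi (UNIV - {u})" unfolding psi_def inj_on_def by auto
  have psiV: "psi x \<in> V" if "x \<in> V" for x using that uV unfolding psi_def by simp

  have F1: "psi ` g \<notin> E" if hy: "g \<in> E" "u \<notin> g" "v \<in> g" for g
  proof
    assume pE: "psi ` g \<in> E"
    obtain y where y: "g = {v,y}" "y \<noteq> v" using card2_ex[OF _ hy(3)] sg[OF hy(1)] by blast
    have yu: "y \<noteq> u" using y hy(2) by auto
    have pg: "psi ` g = {u,y}" using y psi_v unfolding psi_def by (simp add: insert_commute)
    have n1: "{u,y} \<noteq> {u,v}" using y(2) uv(2) by (auto simp: doubleton_eq_iff)
    have n2: "{y,v} \<noteq> {u,v}" using yu uv(2) by (auto simp: doubleton_eq_iff)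
    have e2: "{y,v} \<in> E" using hy(1) y(1) by (simp add: insert_commute)
    have "adj (E - {{u,v}}) u y" using pE pg n1 unfolding adj_def by simp
    moreover have "adj (E - {{u,v}}) y v" using e2 n2 unfolding adj_def by simp
    ultimately show False using nR by (meson r_into_rtranclp rtranclp.rtrancl_into_rtrancl)
  qed

  have fe: "f g = psi ` g" if hg: "g \<in> E" "g \<noteq> {u,v}" for g
  proof (cases "u \<in> g")
    case True
    obtain y where y: "g = {u,y}" "y \<noteq> u" using card2_ex[OF _ True] sg[OF hg(1)] by blast
    have "y \<noteq> v" using y hg(2) by auto
    then have "psi y = y" unfolding psi_def by simp
    then have "psi ` g = g" using y psi_u by simp
    then show ?thesis using True unfolding f_def by simp
  next
    case False then show ?thesis unfolding f_def by simp
  qed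

  have finj: "inj_on f E"
  proof (rule inj_onI)
    fix g1 g2 assume g: "g1 \<in> E" "g2 \<in> E" "f g1 = f g2"
    have mixed: "False" if hh: "h1 \<in> E" "h2 \<in> E" "u \<in> h1" "u \<notin> h2" "h1 = psi ` h2" for h1 h2
    proof -
      have "u \<in> psi ` h2" using hh(3,5) by simp
      then obtain x where x: "x \<in> h2" "psi x = u" by (metis imageE)
      have "x = v" using x hh(4) unfolding psi_def by (cases "x = v") auto
      then have "v \<in> h2" using x(1) by simp
      then have "psi ` h2 \<notin> E" using F1[OF hh(2,4)] by simp
      then show False using hh(1,5) by simp
    qed
    show "g1 = g2"
    proof (cases "u \<in> g1")
      case True
      show ?thesis
      proof (cases "u \<in> g2")
        case True then show ?thesis using g \<open>u \<in> g1\<close> unfolding f_def by simp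
      next
        case False
        have "f g1 = g1" "f g2 = psi ` g2" using False \<open>u \<in> g1\<close> unfolding f_def by simp_all
        then have "g1 = psi ` g2" using g(3) by simp
        then show ?thesis using mixed[OF g(1,2) \<open>u \<in> g1\<close> False] by blast
      qed
    next
      case False
      show ?thesis
      proof (cases "u \<in> g2")
        case True
        have "f g2 = g2" "f g1 = psi ` g1" using True \<open>u \<notin> g1\<close> unfolding f_def by simp_all
        then have "g2 = psi ` g1" using g(3) by simp
        then show ?thesis using mixed[OF g(2,1) True \<open>u \<notin> g1\<close>] by blast
      next
        case False
        then have "psi ` g1 = psi ` g2" using g \<open>u \<notin> g1\<close> unfolding f_def by simp
        moreover have "g1 \<subseteq> UNIV - {u}" "g2 \<subseteq> UNIV - {u}" using False \<open>u \<notin> g1\<close> by auto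
        ultimately show ?thesis using inj_on_image_eq_iff[OF psi_inj] by simp
      qed
    qed
  qed

  have fuv: "f {u,v} = {u,v}" unfolding f_def by simp
  have uvE': "{u,v} \<in> E'" unfolding E'_def using uvE fuv by (metis image_eqI)

  have sgE0: "h \<subseteq> V \<and> card h = 2" if hE: "h \<in> E'" for h
  proof -
    from hE obtain g where g: "g \<in> E" "h = f g" unfolding E'_def by blast
    show "h \<subseteq> V \<and> card h = 2"
    proof (cases "u \<in> g")
      case True then show ?thesis using g sg[OF g(1)] unfolding f_def by simp
    next
      case False
      have "g \<subseteq> UNIV - {u}" using False by auto
      then have "inj_on psi g" using psi_inj inj_on_subset by blast
      then have "card (psi ` g) = card g" by (rule card_image)
      moreover have "psi ` g \<subseteq> V" using sg[OF g(1)] psiV by auto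
      ultimately show ?thesis using g sg[OF g(1)] False unfolding f_def by simp
    qed
  qed
  have sgE': "simple_graph V E'" unfolding simple_graph_def using finV sgE0 by blast

  have Fv: "g = {u,v}" if "g \<in> E" "v \<in> f g" for g
  proof (cases "u \<in> g")
    case True
    then have "v \<in> g" using that unfolding f_def by simp
    then show ?thesis using card2_eq[of g u v] sg[OF that(1)] True uv(2) by simp
  next
    case False
    then have "v \<in> psi ` g" using that unfolding f_def by simp
    then show ?thesis using psi_ne by auto
  qed

  have fpair: "f {x,y} = {psi x, psi y}" if "{x,y} \<in> E" "{x,y} \<noteq> {u,v}" for x y
    using fe[OF that] by simp

  have Dir1: "(adj (E' - f ` D))\<^sup>*\<^sup>* (psi x) (psi y)" if DE: "D \<subseteq> E" and r: "(adj (E - D))\<^sup>*\<^sup>* x y" for D x y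
    using r
  proof (induction rule: rtranclp_induct)
    case base then show ?case by simp
  next
    case (step y z)
    have "(adj (E' - f ` D))\<^sup>*\<^sup>* (psi y) (psi z)"
    proof (cases "{y,z} = {u,v}")
      case True
      then have "y \<in> {u,v}" "z \<in> {u,v}" by (auto simp: doubleton_eq_iff)
      then have "psi y = psi z" using psi_u psi_v by auto
      then show ?thesis by simp
    next
      case False
      have yzE: "{y,z} \<in> E" "{y,z} \<notin> D" using step(2) unfolding adj_def by auto
      have "f {y,z} \<in> E'" unfolding E'_def using yzE by simp
      moreover have "f {y,z} \<notin> f ` D"
      proof
        assume "f {y,z} \<in> f ` D"
        then obtain g where "g \<in> D" "f {y,z} = f g" by blast
        then have "{y,z} = g" using finj yzE DE unfolding inj_on_def by blast
        then show False using yzE \<open>g \<in> D\<close> by simp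
      qed
      ultimately have "adj (E' - f ` D) (psi y) (psi z)"
        using fpair[OF yzE(1) False] unfolding adj_def by simp
      then show ?thesis by simp
    qed
    then show ?case using step(3) by (rule rtranclp_trans[rotated])
  qed

  have zpsi: "(adj (E - {g0}))\<^sup>*\<^sup>* z (psi z)" if "g0 \<noteq> {u,v}" for g0 z
  proof (cases "z = v")
    case True
    have "adj (E - {g0}) v u" using uvE that unfolding adj_def by (simp add: insert_commute)
    then show ?thesis using True psi_v by simp
  next
    case False then show ?thesis unfolding psi_def by simp
  qed

  have Dir2: "(adj (E - {g0}))\<^sup>*\<^sup>* p q" if g0: "g0 \<in> E" "g0 \<noteq> {u,v}" and r: "(adj (E' - {f g0}))\<^sup>*\<^sup>* p q" for g0 p q
    using r
  proof (induction rule: rtranclp_induct)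
    case base then show ?case by simp
  next
    case (step p' q')
    have "{p',q'} \<in> E'" "{p',q'} \<noteq> f g0" using step(2) unfolding adj_def by auto
    then obtain g where g: "g \<in> E" "{p',q'} = f g" "g \<noteq> g0" unfolding E'_def by blast
    have "(adj (E - {g0}))\<^sup>*\<^sup>* p' q'"
    proof (cases "g = {u,v}")
      case True
      then have "adj (E - {g0}) p' q'" using g g0 fuv unfolding adj_def by simp
      then show ?thesis by simp
    next
      case False
      obtain x y where xy: "g = {x,y}" "x \<noteq> y" using sg[OF g(1)] unfolding card_2_iff by blast
      have pq: "{p',q'} = {psi x, psi y}" using g(2) fpair[of x y] g(1) False xy by simp
      have "adj (E - {g0}) x y" using g xy unfolding adj_def by simp
      then have "(adj (E - {g0}))\<^sup>*\<^sup>* x y" by simp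
      then have "(adj (E - {g0}))\<^sup>*\<^sup>* (psi x) (psi y)"
        using zpsi[OF g0(2), of x] zpsi[OF g0(2), of y] R_sym
        by (meson rtranclp_trans)
      then show ?thesis using pq R_sym by (auto simp: doubleton_eq_iff)
    qed
    then show ?case using step(3) by (rule rtranclp_trans[rotated])
  qed

  have connE': "connected_graph V E'"
    unfolding connected_graph_def
  proof (intro conjI ballI)
    show "V \<noteq> {}" using uV by auto
    fix x y assume "x \<in> V" "y \<in> V"
    then have "(adj E)\<^sup>*\<^sup>* x y" using assms(2) unfolding connected_graph_def by simp
    then have "(adj (E - {}))\<^sup>*\<^sup>* x y" by simp
    from Dir1[OF _ this] have r: "(adj E')\<^sup>*\<^sup>* (psi x) (psi y)" by simp
    have zz: "(adj E')\<^sup>*\<^sup>* z (psi z)" for z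
    proof (cases "z = v")
      case True
      have "adj E' v u" using uvE' unfolding adj_def by (simp add: insert_commute)
      then show ?thesis using True psi_v by simp
    next
      case False then show ?thesis unfolding psi_def by simp
    qed
    show "(adj E')\<^sup>*\<^sup>* x y" using zz[of x] zz[of y] r R_sym by (meson rtranclp_trans)
  qed

  have cutuv': "cut_edge V E' {u,v}"
  proof -
    have "\<not> (adj (E' - {{u,v}}))\<^sup>*\<^sup>* u v"
    proof
      assume "(adj (E' - {{u,v}}))\<^sup>*\<^sup>* u v"
      then obtain z where "adj (E' - {{u,v}}) z v" using uv(2) by (metis rtranclp.cases)
      then have z: "{z,v} \<in> E'" "{z,v} \<noteq> {u,v}" unfolding adj_def by auto
      then obtain g where "g \<in> E" "{z,v} = f g" unfolding E'_def by blast
      then have "g = {u,v}" using Fv by auto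
      then show False using z \<open>{z,v} = f g\<close> fuv by simp
    qed
    then show ?thesis using cut_edge_iff[OF sgE' connE' uvE'] by simp
  qed

  have cutequiv: "cut_edge V E' (f g) \<longleftrightarrow> cut_edge V E g" if gE: "g \<in> E" for g
  proof (cases "g = {u,v}")
    case True then show ?thesis using cutuv' ecut uv fuv by simp
  next
    case False
    obtain a b where ab: "g = {a,b}" "a \<noteq> b" using sg[OF gE] unfolding card_2_iff by blast
    have fg: "f g = {psi a, psi b}" using fpair[of a b] gE False ab by simp
    have fgE': "{psi a, psi b} \<in> E'" using fg gE unfolding E'_def by (metis image_eqI)
    have "(adj (E - {g}))\<^sup>*\<^sup>* a b \<longleftrightarrow> (adj (E' - {f g}))\<^sup>*\<^sup>* (psi a) (psi b)"
    proof
      assume "(adj (E - {g}))\<^sup>*\<^sup>* a b"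
      from Dir1[of "{g}", OF _ this] gE show "(adj (E' - {f g}))\<^sup>*\<^sup>* (psi a) (psi b)" by simp
    next
      assume "(adj (E' - {f g}))\<^sup>*\<^sup>* (psi a) (psi b)"
      from Dir2[OF gE False this] have "(adj (E - {g}))\<^sup>*\<^sup>* (psi a) (psi b)" .
      then show "(adj (E - {g}))\<^sup>*\<^sup>* a b"
        using zpsi[OF False, of a] zpsi[OF False, of b] R_sym by (meson rtranclp_trans)
    qed
    then show ?thesis using cut_edge_iff[OF assms(1,2), of a b] cut_edge_iff[OF sgE' connE' fgE'] ab fg gE
      by simp
  qed

  have cutE': "cut_edges V E' = f ` cut_edges V E"
  proof -
    have "cut_edges V E' = {h \<in> f ` E. cut_edge V E' h}" unfolding cut_edges_def E'_def by simp
    also have "\<dots> = f ` {g \<in> E. cut_edge V E' (f g)}" by auto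
    also have "\<dots> = f ` {g \<in> E. cut_edge V E g}" using cutequiv by auto
    finally show ?thesis unfolding cut_edges_def by simp
  qed
  have cardcut: "card (cut_edges V E') = k"
    using cutE' card_image[OF inj_on_subset[OF finj]] assms(4) unfolding cut_edges_def by auto

  define d' where "d' = degree E'"
  have d'x: "d' x = d x" if "x \<noteq> u" "x \<noteq> v" for x
  proof -
    have mem: "x \<in> f g \<longleftrightarrow> x \<in> g" for g
      using that unfolding f_def psi_def by auto
    have "{h \<in> E'. x \<in> h} = f ` {g \<in> E. x \<in> g}" unfolding E'_def using mem by auto
    then show ?thesis unfolding d'_def d_def degree_def
      using card_image[OF inj_on_subset[OF finj]] by simp
  qed
  have d'u: "d' u = d u + d v - 1"
  proof -
    have mem: "u \<in> f g \<longleftrightarrow> u \<in> g \<or> v \<in> g" for g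
    proof (cases "u \<in> g")
      case True then show ?thesis unfolding f_def by simp
    next
      case False
      have "u \<in> psi ` g \<longleftrightarrow> v \<in> g"
      proof
        assume "u \<in> psi ` g"
        then obtain x where x: "x \<in> g" "psi x = u" by (metis imageE)
        have "x = v" using x False unfolding psi_def by (cases "x = v") auto
        then show "v \<in> g" using x by simp
      next
        assume "v \<in> g" then show "u \<in> psi ` g" using psi_v by (metis imageI)
      qed
      then show ?thesis using False unfolding f_def by simp
    qed
    have "{h \<in> E'. u \<in> h} = f ` ({g \<in> E. u \<in> g} \<union> {g \<in> E. v \<in> g})" unfolding E'_def using mem by auto
    then have "d' u = card ({g \<in> E. u \<in> g} \<union> {g \<in> E. v \<in> g})" unfolding d'_def degree_def
      using card_image[OF inj_on_subset[OF finj]] by simp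
    moreover have "{g \<in> E. u \<in> g} \<inter> {g \<in> E. v \<in> g} = {{u,v}}"
    proof -
      have "g = {u,v}" if "g \<in> E" "u \<in> g" "v \<in> g" for g
        using card2_eq[of g u v] sg[OF that(1)] that(2,3) uv(2) by simp
      then show ?thesis using uvE by blast
    qed
    moreover have "card ({g \<in> E. u \<in> g} \<union> {g \<in> E. v \<in> g}) + card ({g \<in> E. u \<in> g} \<inter> {g \<in> E. v \<in> g}) = d u + d v"
      unfolding d_def degree_def using card_Un_Int[of "{g \<in> E. u \<in> g}" "{g \<in> E. v \<in> g}"] finE by simp
    ultimately show ?thesis by simp
  qed
  have d'v: "d' v = 1"
  proof -
    have "h = {u,v}" if hh: "h \<in> E'" "v \<in> h" for h
    proof -
      obtain g where g: "g \<in> E" "h = f g" using hh(1) unfolding E'_def by blast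
      then have "g = {u,v}" using Fv[OF g(1)] hh(2) by simp
      then show ?thesis using g(2) fuv by simp
    qed
    then have "{h \<in> E'. v \<in> h} = {{u,v}}" using uvE' by blast
    then show ?thesis unfolding d'_def degree_def by simp
  qed
  have dmono: "d a \<le> d' (psi a)" for a
  proof (cases "a = v")
    case True then show ?thesis using d'u psi_v du by simp
  next
    case False
    show ?thesis
    proof (cases "a = u")
      case True then show ?thesis using d'u psi_u dv by simp
    next
      case False then show ?thesis using d'x \<open>a \<noteq> v\<close> unfolding psi_def by simp
    qed
  qed

  have lt: "st E {u,v} < st E' (f {u,v})"
  proof -
    define a where "a = real (d u)"
    define b where "b = real (d v)"
    have a2: "a \<ge> 2" and b2: "b \<ge> 2" using du dv unfolding a_def b_def by simp_all
    have "real (d' u) = a + b - 1" using d'u du unfolding a_def b_def by simp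
    then have "st E' (f {u,v}) = sqrt ((a + b - 1)^2 + 1)" using fuv st_eq[OF uv(2)] d'_def d'v by simp
    moreover have "st E {u,v} = sqrt (a^2 + b^2)" using st_eq[OF uv(2)] d_def a_def b_def by simp
    moreover have "a^2 + b^2 < (a + b - 1)^2 + 1"
    proof -
      have "(a - 1) * (b - 1) > 0" using a2 b2 by simp
      moreover have "(a + b - 1)^2 + 1 - (a^2 + b^2) = 2 * ((a - 1) * (b - 1))"
        by (simp add: power2_eq_square algebra_simps)
      ultimately show ?thesis by linarith
    qed
    ultimately show ?thesis by simp
  qed
  have le: "st E g \<le> st E' (f g)" if gE: "g \<in> E" for g
  proof (cases "g = {u,v}")
    case True then show ?thesis using lt by simp
  next
    case False
    obtain a b where ab: "g = {a,b}" "a \<noteq> b" using sg[OF gE] unfolding card_2_iff by blast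
    have fg: "f g = {psi a, psi b}" using fpair[of a b] gE False ab by simp
    have "f g \<in> E'" unfolding E'_def using gE by simp
    then have "card (f g) = 2" using sgE0 by blast
    then have ne: "psi a \<noteq> psi b" using fg by (cases "psi a = psi b") simp_all
    have "st E g = sqrt (real (d a)^2 + real (d b)^2)" using ab st_eq[OF ab(2)] d_def by simp
    moreover have "st E' (f g) = sqrt (real (d' (psi a))^2 + real (d' (psi b))^2)" using fg st_eq[OF ne] d'_def by simp
    moreover have "real (d a)^2 + real (d b)^2 \<le> real (d' (psi a))^2 + real (d' (psi b))^2"
      using dmono[of a] dmono[of b] by (intro add_mono power_mono) simp_all
    ultimately show ?thesis using real_sqrt_le_mono by simp
  qed
  have "sombor E < sombor E'"
  proof -
    have "sombor E' = (\<Sum>g\<in>E. st E' (f g))"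
      unfolding sombor_st E'_def using sum.reindex[OF finj] by simp
    moreover have "(\<Sum>g\<in>E. st E g) < (\<Sum>g\<in>E. st E' (f g))"
      using finE le lt uvE by (intro sum_strict_mono_ex1) auto
    ultimately show ?thesis unfolding sombor_st by simp
  qed
  moreover have "sombor E' \<le> sombor E"
    using assms(5) sgE' connE' assms(3) cardcut by blast
  ultimately show False by simp
qed

end
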